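(* Let $\ell\ge1$, $2n=\ell(\ell+1)$, and fix integers $k\ge1$ and $N\ge1$ independent of $\ell$, with $2k\le\ell+1$. Let $Y^{(1)},\dots,Y^{(N)}$ be independent, each uniformly random among all ordered partitions of $[2n]$ into $\ell+1$ subsets of size $\ell$. Then the probability $P_N$ that some $S\in\mathcal S_{2k}$ is generated by none of $Y^{(1)},\dots,Y^{(N)}$ satisfies $P_N\le\binom{2n}{2k}P(S)^N$ and $P_N=\mathcal O(\ell^{4k-N})$ as $\ell\to\infty$; in particular $P_N\to0$ whenever $N>4k$.
   Context: $\mathcal S_{2k}=\{S\subseteq[2n]:|S|=2k\}$. A set $S$ is generated from a partition $Y=(Y_1,\dots,Y_{\ell+1})$ if no two elements of $S$ lie in the same $Y_i$. $P(S)=1-\ell^{2k}\binom{\ell+1}{2k}\binom{2n}{2k}^{-1}$ is the probability that a fixed $S$ is not generated by one uniformly random partition. *)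

theory Defs
  imports "HOL-Probability.Probability" "HOL-Library.Landau_Symbols"
begin

text \<open>Ground set [2n] with 2n = l(l+1), realised as {1..l*(l+1)}.\<close>

text \<open>Blocks are indexed by 0..l; the function is fixed to be empty outside the index range
  so that the set of ordered partitions is finite.\<close>
definition ordered_partitions :: "nat \<Rightarrow> (nat \<Rightarrow> nat set) set" where
  "ordered_partitions l =
    {Y. (\<forall>i<l+1. card (Y i) = l) \<and>
        (\<forall>i<l+1. \<forall>j<l+1. i \<noteq> j \<longrightarrow> Y i \<inter> Y j = {}) \<and>
        (\<Union>i<l+1. Y i) = {1..l*(l+1)} \<and>
        (\<forall>i. l+1 \<le> i \<longrightarrow> Y i = {})}"

definition generated_by :: "nat \<Rightarrow> (nat \<Rightarrow> nat set) \<Rightarrow> nat set \<Rightarrow> bool" where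
  "generated_by l Y S \<longleftrightarrow> (\<forall>i<l+1. \<forall>x\<in>S. \<forall>y\<in>S. x \<in> Y i \<longrightarrow> y \<in> Y i \<longrightarrow> x = y)"

definition subsets_2k :: "nat \<Rightarrow> nat \<Rightarrow> nat set set" where
  "subsets_2k l k = {S. S \<subseteq> {1..l*(l+1)} \<and> card S = 2*k}"

definition P_single :: "nat \<Rightarrow> nat \<Rightarrow> real" where
  "P_single l k = 1 - real l ^ (2*k) * real ((l+1) choose (2*k)) / real ((l*(l+1)) choose (2*k))"

definition partitions_pmf :: "nat \<Rightarrow> nat \<Rightarrow> (nat \<Rightarrow> nat \<Rightarrow> nat set) pmf" where
  "partitions_pmf l N = Pi_pmf {..<N} (\<lambda>_. {}) (\<lambda>_. pmf_of_set (ordered_partitions l))"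

definition P_N :: "nat \<Rightarrow> nat \<Rightarrow> nat \<Rightarrow> real" where
  "P_N l k N = measure_pmf.prob (partitions_pmf l N)
     {Ys. \<exists>S\<in>subsets_2k l k. \<forall>j<N. \<not> generated_by l (Ys j) S}"

end

theory Submission
  imports Defs
begin



lemma op_props:
  assumes "Y \<in> ordered_partitions l"
  shows "\<And>i. i < l+1 \<Longrightarrow> card (Y i) = l"
    and "\<And>i j x. i < l+1 \<Longrightarrow> j < l+1 \<Longrightarrow> x \<in> Y i \<Longrightarrow> x \<in> Y j \<Longrightarrow> i = j"
    and "\<And>i. i < l+1 \<Longrightarrow> Y i \<subseteq> {1..l*(l+1)}"
    and "\<And>x. x \<in> {1..l*(l+1)} \<Longrightarrow> \<exists>i<l+1. x \<in> Y i"
    and "\<And>i. l+1 \<le> i \<Longrightarrow> Y i = {}"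
proof -
  note h = assms[unfolded ordered_partitions_def mem_Collect_eq]
  have c: "\<forall>i<l+1. card (Y i) = l" using h by (rule conjunct1)
  have d: "\<forall>i<l+1. \<forall>j<l+1. i \<noteq> j \<longrightarrow> Y i \<inter> Y j = {}" using h[THEN conjunct2] by (rule conjunct1)
  have u: "(\<Union>i<l+1. Y i) = {1..l*(l+1)}" using h[THEN conjunct2, THEN conjunct2] by (rule conjunct1)
  have e: "\<forall>i. l+1 \<le> i \<longrightarrow> Y i = {}" using h[THEN conjunct2, THEN conjunct2] by (rule conjunct2)
  show "\<And>i. i < l+1 \<Longrightarrow> card (Y i) = l" using c by simp
  show "i = j" if "i < l+1" "j < l+1" "x \<in> Y i" "x \<in> Y j" for i j x
  proof (rule ccontr)
    assume "i \<noteq> j"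
    then have "Y i \<inter> Y j = {}" using d that by simp
    then show False using that by auto
  qed
  show "Y i \<subseteq> {1..l*(l+1)}" if "i < l+1" for i
  proof -
    have "Y i \<subseteq> (\<Union>i<l+1. Y i)" using that by (intro UN_upper) simp
    then show ?thesis by (simp only: u)
  qed
  show "\<exists>i<l+1. x \<in> Y i" if "x \<in> {1..l*(l+1)}" for x
  proof -
    have "x \<in> (\<Union>i<l+1. Y i)" using that by (simp only: u)
    then show ?thesis by auto
  qed
  show "\<And>i. l+1 \<le> i \<Longrightarrow> Y i = {}" using e by simp
qed

lemma op_finite: "finite (ordered_partitions l)"
proof -
  let ?T = "PiE {..<l+1} (\<lambda>_. Pow {1..l*(l+1)})"
  have inj: "inj_on (\<lambda>Y. restrict Y {..<l+1}) (ordered_partitions l)"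
  proof (rule inj_onI)
    fix Y Z assume Y: "Y \<in> ordered_partitions l" and Z: "Z \<in> ordered_partitions l"
      and e: "restrict Y {..<l+1} = restrict Z {..<l+1}"
    show "Y = Z"
    proof
      fix i show "Y i = Z i"
      proof (cases "i < l+1")
        case True then show ?thesis using e by (metis lessThan_iff restrict_apply')
      next
        case False then show ?thesis using op_props(5)[OF Y] op_props(5)[OF Z] by simp
      qed
    qed
  qed
  have sub: "(\<lambda>Y. restrict Y {..<l+1}) ` ordered_partitions l \<subseteq> ?T"
  proof (rule image_subsetI)
    fix Y assume Y: "Y \<in> ordered_partitions l"
    show "restrict Y {..<l+1} \<in> ?T" using op_props(3)[OF Y] by auto
  qed
  have fT: "finite ?T" by (intro finite_PiE) auto
  have "finite ((\<lambda>Y. restrict Y {..<l+1}) ` ordered_partitions l)" by (rule finite_subset[OF sub fT])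
  then show ?thesis by (rule finite_imageD[OF _ inj])
qed

definition Y0 :: "nat \<Rightarrow> nat \<Rightarrow> nat set" where
  "Y0 l i = (if i < l+1 then {i*l+1..(i+1)*l} else {})"

lemma Y0_op: "Y0 l \<in> ordered_partitions l"
  unfolding ordered_partitions_def
proof (intro CollectI conjI allI impI)
  fix i assume "i < l+1" then show "card (Y0 l i) = l" by (simp add: Y0_def)
next
  fix i j assume "i < l+1" "j < l+1" "i \<noteq> j"
  then show "Y0 l i \<inter> Y0 l j = {}"
  proof (cases "i < j")
    case True
    then have "(i+1)*l \<le> j*l" by (intro mult_right_mono) auto
    then show ?thesis using True by (auto simp: Y0_def)
  next
    case False
    then have "(j+1)*l \<le> i*l" using \<open>i \<noteq> j\<close> by (intro mult_right_mono) auto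
    then show ?thesis by (auto simp: Y0_def)
  qed
next
  fix i :: nat assume "l+1 \<le> i" then show "Y0 l i = {}" by (simp add: Y0_def)
next
  show "(\<Union>i<l+1. Y0 l i) = {1..l*(l+1)}"
  proof
    show "(\<Union>i<l+1. Y0 l i) \<subseteq> {1..l*(l+1)}"
    proof
      fix x assume "x \<in> (\<Union>i<l+1. Y0 l i)"
      then obtain i where i: "i < l+1" "x \<in> {i*l+1..(i+1)*l}" by (auto simp: Y0_def)
      have "(i+1)*l \<le> (l+1)*l" using i(1) by (intro mult_right_mono) auto
      then have "x \<le> (l+1)*l" using i(2) by (meson atLeastAtMost_iff le_trans)
      then show "x \<in> {1..l*(l+1)}" using i by (auto simp: mult.commute)
    qed
  next
    show "{1..l*(l+1)} \<subseteq> (\<Union>i<l+1. Y0 l i)"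
    proof
      fix x assume x: "x \<in> {1..l*(l+1)}"
      then have l: "l > 0" by (cases l) auto
      define i where "i = (x - 1) div l"
      have "x - 1 < l*(l+1)" using x by auto
      then have il: "i < l+1" unfolding i_def by (simp add: l div_less_iff_less_mult mult.commute)
      have dm: "i*l + (x-1) mod l = x - 1" unfolding i_def by (rule div_mult_mod_eq)
      have md: "(x-1) mod l < l" using l by simp
      have e: "i*l + l = (i+1)*l" by simp
      have "i*l \<le> x - 1" "x - 1 < (i+1)*l" using dm md e by linarith+
      moreover have x1: "1 \<le> x" using x by simp
      ultimately have a1: "i*l+1 \<le> x" and a2: "x \<le> (i+1)*l" by linarith+
      then have "x \<in> {i*l+1..(i+1)*l}" by (simp only: atLeastAtMost_iff)
      then have "x \<in> Y0 l i" using il by (simp add: Y0_def)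
      then show "x \<in> (\<Union>i<l+1. Y0 l i)" using il by blast
    qed
  qed
qed




lemma op_sub: "Y \<in> ordered_partitions l \<Longrightarrow> Y i \<subseteq> {1..l*(l+1)}"
  using op_props(3)[of Y l i] op_props(5)[of Y l i] by (cases "i < l+1") auto

lemma transversal_count:
  assumes Y: "Y \<in> ordered_partitions l"
  shows "card {S. S \<subseteq> {1..l*(l+1)} \<and> card S = m \<and> generated_by l Y S} = ((l+1) choose m) * l^m"
proof -
  let ?G = "{1..l*(l+1)}"
  let ?Is = "{I. I \<subseteq> {..<l+1} \<and> card I = m}"
  let ?Sig = "Sigma ?Is (\<lambda>I. PiE I Y)"
  let ?T = "{S. S \<subseteq> ?G \<and> card S = m \<and> generated_by l Y S}"
  note dis = op_props(2)[OF Y]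
  have bij: "bij_betw (\<lambda>(I,f). f ` I) ?Sig ?T"
  proof (rule bij_betw_imageI)
    show "inj_on (\<lambda>(I,f). f ` I) ?Sig"
    proof (rule inj_onI, clarify)
      fix I f I' f'
      assume I: "I \<subseteq> {..<l+1}" "f \<in> PiE I Y" and I': "I' \<subseteq> {..<l+1}" "f' \<in> PiE I' Y"
        and e: "f ` I = f' ` I'"
      have key: "i \<in> I'" "f i = f' i" if "i \<in> I" for i
      proof -
        have "f i \<in> f' ` I'" using e that by blast
        then obtain j where j: "j \<in> I'" "f i = f' j" by auto
        have "f i \<in> Y i" using I(2) that by auto
        have "f' j \<in> Y j" using I'(2) j(1) by auto
        then have "i = j" using dis[of i j "f i"] \<open>f i \<in> Y i\<close> I I' that j by auto
        then show "i \<in> I'" "f i = f' i" using j by auto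
      qed
      have key2: "i \<in> I" if "i \<in> I'" for i
      proof -
        have "f' i \<in> f ` I" using e that by blast
        then obtain j where j: "j \<in> I" "f' i = f j" by auto
        have "f' i \<in> Y i" using I'(2) that by auto
        have "f j \<in> Y j" using I(2) j(1) by auto
        then have "i = j" using dis[of i j "f' i"] \<open>f' i \<in> Y i\<close> I I' that j by auto
        then show "i \<in> I" using j by auto
      qed
      have II: "I = I'" using key(1) key2 by blast
      have "f = f'"
      proof
        fix i show "f i = f' i"
        proof (cases "i \<in> I")
          case True then show ?thesis using key by auto
        next
          case False then show ?thesis using I(2) I'(2) II by (auto simp: PiE_def extensional_def)
        qed
      qed
      then show "I = I' \<and> f = f'" using II by simp
    qed
  next
    show "(\<lambda>(I,f). f ` I) ` ?Sig = ?T"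
    proof
      show "(\<lambda>(I,f). f ` I) ` ?Sig \<subseteq> ?T"
      proof
        fix S assume "S \<in> (\<lambda>(I,f). f ` I) ` ?Sig"
        then obtain I f where I: "I \<subseteq> {..<l+1}" "card I = m" "f \<in> PiE I Y" and SI: "S = f ` I" by auto
        have fY: "f i \<in> Y i" if "i \<in> I" for i using I that by auto
        have inj: "inj_on f I"
        proof (rule inj_onI)
          fix i j assume "i \<in> I" "j \<in> I" "f i = f j"
          then show "i = j" using dis[of i j "f i"] fY I(1) by fastforce
        qed
        have "f ` I \<subseteq> ?G" using fY I(1) op_props(3)[OF Y] by fastforce
        moreover have "card (f ` I) = m" using card_image[OF inj] I(2) by simp
        moreover have "generated_by l Y (f ` I)"
          unfolding generated_by_def
        proof (intro allI impI ballI)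
          fix i x y assume i: "i < l+1" and x: "x \<in> f ` I" and y: "y \<in> f ` I"
            and xi: "x \<in> Y i" and yi: "y \<in> Y i"
          obtain a where a: "a \<in> I" "x = f a" using x by auto
          obtain b where b: "b \<in> I" "y = f b" using y by auto
          have "a = i" using dis[of a i x] a fY I(1) xi i by fastforce
          moreover have "b = i" using dis[of b i y] b fY I(1) yi i by fastforce
          ultimately show "x = y" using a b by simp
        qed
        ultimately show "S \<in> ?T" using SI by simp
      qed
    next
      show "?T \<subseteq> (\<lambda>(I,f). f ` I) ` ?Sig"
      proof
        fix S assume S: "S \<in> ?T"
        then have SG: "S \<subseteq> ?G" and cS: "card S = m" and gen: "generated_by l Y S" by auto
        define I where "I = {i. i < l+1 \<and> Y i \<inter> S \<noteq> {}}"
        define f where "f = restrict (\<lambda>i. THE x. x \<in> Y i \<inter> S) I"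
        have uniq: "x = y" if "i < l+1" "x \<in> Y i \<inter> S" "y \<in> Y i \<inter> S" for i x y
          using gen that unfolding generated_by_def by blast
        have fI: "f i \<in> Y i \<inter> S" if iI: "i \<in> I" for i
        proof -
          obtain x where "x \<in> Y i \<inter> S" using iI unfolding I_def by auto
          then have "\<exists>!x. x \<in> Y i \<inter> S" using uniq iI unfolding I_def by blast
          then have "(THE x. x \<in> Y i \<inter> S) \<in> Y i \<inter> S" by (rule theI')
          then show ?thesis using iI unfolding f_def by simp
        qed
        have img: "f ` I = S"
        proof
          show "f ` I \<subseteq> S" using fI by auto
        next
          show "S \<subseteq> f ` I"
          proof
            fix x assume x: "x \<in> S"
            then obtain i where i: "i < l+1" "x \<in> Y i" using op_props(4)[OF Y] SG by blast
            then have iI: "i \<in> I" using x unfolding I_def by auto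
            then have "f i = x" using uniq[of i "f i" x] fI i x unfolding I_def by auto
            then show "x \<in> f ` I" using iI by force
          qed
        qed
        have inj: "inj_on f I"
        proof (rule inj_onI)
          fix i j assume "i \<in> I" "j \<in> I" "f i = f j"
          then show "i = j" using dis[of i j "f i"] fI unfolding I_def by fastforce
        qed
        have "card I = m" using card_image[OF inj] img cS by simp
        moreover have "I \<subseteq> {..<l+1}" unfolding I_def by auto
        moreover have "f \<in> PiE I Y" using fI unfolding f_def by auto
        ultimately show "S \<in> (\<lambda>(I,f). f ` I) ` ?Sig" using img by (intro image_eqI[of _ _ "(I,f)"]) auto
      qed
    qed
  qed
  have fin: "finite ?Is" by (rule finite_subset[of _ "Pow {..<l+1}"]) auto
  have "card ?T = card ?Sig" using bij_betw_same_card[OF bij] by simp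
  also have "\<dots> = (\<Sum>I\<in>?Is. card (PiE I Y))"
  proof (rule card_SigmaI[OF fin], rule ballI)
    fix I assume "I \<in> ?Is"
    then have "I \<subseteq> {..<l+1}" by simp
    then have "finite I" by (rule finite_subset) simp
    moreover have "finite (Y i)" for i by (rule finite_subset[OF op_sub[OF Y]]) simp
    ultimately show "finite (PiE I Y)" by (intro finite_PiE) auto
  qed
  also have "\<dots> = (\<Sum>I\<in>?Is. l^m)"
  proof (rule sum.cong[OF refl])
    fix I assume I: "I \<in> ?Is"
    then have "I \<subseteq> {..<l+1}" by simp
    then have "finite I" by (rule finite_subset) simp
    then have "card (PiE I Y) = (\<Prod>i\<in>I. card (Y i))" by (rule card_PiE)
    also have "\<dots> = (\<Prod>i\<in>I. l)" using I op_props(1)[OF Y] by (intro prod.cong) auto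
    finally show "card (PiE I Y) = l^m" using I by simp
  qed
  also have "\<dots> = ((l+1) choose m) * l^m" using n_subsets[of "{..<l+1}" m] by simp
  finally show ?thesis .
qed





lemma sym_le:
  assumes S: "S \<subseteq> {1..l*(l+1)}" and S': "S' \<subseteq> {1..l*(l+1)}" and c: "card S = card S'"
  shows "card {Y\<in>ordered_partitions l. generated_by l Y S}
          \<le> card {Y\<in>ordered_partitions l. generated_by l Y S'}"
proof -
  let ?G = "{1..l*(l+1)}"
  obtain f where f: "bij_betw f S S'"
    using finite_same_card_bij[OF finite_subset[OF S] finite_subset[OF S'] c] by auto
  have "card (?G - S) = card (?G - S')" using S S' c by (simp add: card_Diff_subset finite_subset)
  then obtain g where g: "bij_betw g (?G - S) (?G - S')"
    using finite_same_card_bij[of "?G - S" "?G - S'"] by auto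
  define h where "h x = (if x \<in> S then f x else g x)" for x
  have f2: "bij_betw h S S'" using f by (rule bij_betw_cong[THEN iffD1, rotated]) (simp add: h_def)
  have g2: "bij_betw h (?G - S) (?G - S')" using g by (rule bij_betw_cong[THEN iffD1, rotated]) (simp add: h_def)
  have "bij_betw h (S \<union> (?G - S)) (S' \<union> (?G - S'))" by (rule bij_betw_combine[OF f2 g2]) auto
  then have bij: "bij_betw h ?G ?G" using S S' by (simp add: Un_absorb1 Un_Diff_cancel)
  then have inj: "inj_on h ?G" and img: "h ` ?G = ?G" by (auto simp: bij_betw_def)
  have bk: "x \<in> S" if "x \<in> ?G" "h x \<in> S'" for x
  proof (rule ccontr)
    assume "x \<notin> S"
    then have "x \<in> ?G - S" using that(1) by blast
    then have "h x \<in> h ` (?G - S)" by (rule imageI)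
    then have "h x \<in> ?G - S'" using g2 by (simp add: bij_betw_def)
    then show False using that(2) by auto
  qed
  define \<Phi> where "\<Phi> Y = (\<lambda>i. h ` Y i)" for Y :: "nat \<Rightarrow> nat set"
  have "inj_on \<Phi> {Y\<in>ordered_partitions l. generated_by l Y S}"
  proof (rule inj_onI)
    fix Y Z assume Y: "Y \<in> {Y\<in>ordered_partitions l. generated_by l Y S}"
      and Z: "Z \<in> {Y\<in>ordered_partitions l. generated_by l Y S}" and e: "\<Phi> Y = \<Phi> Z"
    show "Y = Z"
    proof
      fix i
      have "h ` Y i = h ` Z i" using e unfolding \<Phi>_def by metis
      moreover have "Y i \<subseteq> ?G" "Z i \<subseteq> ?G" using Y Z op_sub by auto
      ultimately show "Y i = Z i" using inj_on_image_eq_iff[OF inj] by metis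
    qed
  qed
  moreover have "\<Phi> ` {Y\<in>ordered_partitions l. generated_by l Y S}
      \<subseteq> {Y\<in>ordered_partitions l. generated_by l Y S'}"
  proof (rule image_subsetI)
    fix Y assume YY: "Y \<in> {Y\<in>ordered_partitions l. generated_by l Y S}"
    then have Y: "Y \<in> ordered_partitions l" and gen: "generated_by l Y S" by auto
    have injY: "inj_on h (Y i)" for i using inj op_sub[OF Y] by (rule inj_on_subset)
    have "\<Phi> Y \<in> ordered_partitions l"
      unfolding ordered_partitions_def
    proof (intro CollectI conjI allI impI)
      fix i assume "i < l+1" then show "card (\<Phi> Y i) = l"
        unfolding \<Phi>_def using card_image[OF injY] op_props(1)[OF Y] by simp
    next
      fix i j assume "i < l+1" "j < l+1" "i \<noteq> j"
      then have "Y i \<inter> Y j = {}" using Y unfolding ordered_partitions_def by blast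
      then show "\<Phi> Y i \<inter> \<Phi> Y j = {}" unfolding \<Phi>_def
        using inj_on_image_Int[OF inj op_sub[OF Y] op_sub[OF Y], of i j] by (metis image_empty)
    next
      fix i :: nat assume "l+1 \<le> i" then show "\<Phi> Y i = {}" using op_props(5)[OF Y] by (simp add: \<Phi>_def)
    next
      have "(\<Union>i<l+1. \<Phi> Y i) = h ` (\<Union>i<l+1. Y i)" unfolding \<Phi>_def by auto
      also have "(\<Union>i<l+1. Y i) = ?G" using Y unfolding ordered_partitions_def by blast
      finally show "(\<Union>i<l+1. \<Phi> Y i) = ?G" using img by simp
    qed
    moreover have "generated_by l (\<Phi> Y) S'"
      unfolding generated_by_def
    proof (intro allI impI ballI)
      fix i x y assume i: "i < l+1" and x: "x \<in> S'" and y: "y \<in> S'" and xi: "x \<in> \<Phi> Y i" and yi: "y \<in> \<Phi> Y i"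
      obtain a where a: "a \<in> Y i" "x = h a" using xi unfolding \<Phi>_def by auto
      obtain b where b: "b \<in> Y i" "y = h b" using yi unfolding \<Phi>_def by auto
      have aG: "a \<in> ?G" "b \<in> ?G" using a(1) b(1) op_sub[OF Y, of i] by blast+
      have "a \<in> S" "b \<in> S" using bk aG a b x y by auto
      then have "a = b" using gen i a b unfolding generated_by_def by blast
      then show "x = y" using a b by simp
    qed
    ultimately show "\<Phi> Y \<in> {Y\<in>ordered_partitions l. generated_by l Y S'}" by simp
  qed
  moreover have "finite {Y\<in>ordered_partitions l. generated_by l Y S'}" using op_finite by simp
  ultimately show ?thesis by (rule card_inj_on_le)
qed




lemma card_filter_sum: "finite A \<Longrightarrow> card {x\<in>A. P x} = (\<Sum>x\<in>A. if P x then 1 else 0::nat)"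
proof -
  assume "finite A"
  have "(\<Sum>x\<in>A. if P x then 1 else 0::nat) = (\<Sum>x\<in>{x\<in>A. P x}. 1)"
    using \<open>finite A\<close> by (simp add: sum.If_cases Int_def conj_commute)
  then show ?thesis by simp
qed

lemma subsets_finite: "finite (subsets_2k l k)"
  unfolding subsets_2k_def by (rule finite_subset[of _ "Pow {1..l*(l+1)}"]) auto

lemma card_subsets: "card (subsets_2k l k) = (l*(l+1)) choose (2*k)"
  unfolding subsets_2k_def using n_subsets[of "{1..l*(l+1)}" "2*k"] by simp

lemma count_eq:
  assumes S: "S \<in> subsets_2k l k"
  shows "card {Y\<in>ordered_partitions l. generated_by l Y S} * ((l*(l+1)) choose (2*k))
         = card (ordered_partitions l) * (((l+1) choose (2*k)) * l^(2*k))"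
proof -
  let ?OP = "ordered_partitions l" and ?Sub = "subsets_2k l k"
  let ?c = "\<lambda>S. card {Y\<in>?OP. generated_by l Y S}"
  have ceq: "?c S' = ?c S" if "S' \<in> ?Sub" for S'
    using sym_le[of S l S'] sym_le[of S' l S] S that unfolding subsets_2k_def by auto
  have "(\<Sum>S'\<in>?Sub. ?c S') = (\<Sum>S'\<in>?Sub. \<Sum>Y\<in>?OP. if generated_by l Y S' then 1 else 0)"
    using op_finite by (simp add: card_filter_sum)
  also have "\<dots> = (\<Sum>Y\<in>?OP. \<Sum>S'\<in>?Sub. if generated_by l Y S' then 1 else 0)"
    by (rule sum.swap)
  also have "\<dots> = (\<Sum>Y\<in>?OP. card {S'\<in>?Sub. generated_by l Y S'})"
    using subsets_finite by (simp add: card_filter_sum)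
  also have "\<dots> = (\<Sum>Y\<in>?OP. ((l+1) choose (2*k)) * l^(2*k))"
  proof (rule sum.cong[OF refl])
    fix Y assume "Y \<in> ?OP"
    moreover have "{S'\<in>?Sub. generated_by l Y S'} = {S. S \<subseteq> {1..l*(l+1)} \<and> card S = 2*k \<and> generated_by l Y S}"
      unfolding subsets_2k_def by auto
    ultimately show "card {S'\<in>?Sub. generated_by l Y S'} = ((l+1) choose (2*k)) * l^(2*k)"
      using transversal_count by simp
  qed
  finally have "(\<Sum>S'\<in>?Sub. ?c S') = card ?OP * (((l+1) choose (2*k)) * l^(2*k))" by simp
  moreover have "(\<Sum>S'\<in>?Sub. ?c S') = card ?Sub * ?c S" using ceq by simp
  ultimately show ?thesis using card_subsets[of l k] by (simp add: mult.commute)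
qed

lemma prob_not_gen:
  assumes S: "S \<in> subsets_2k l k" and l: "l \<ge> 1" and kl: "2*k \<le> l+1"
  shows "measure_pmf.prob (pmf_of_set (ordered_partitions l)) {Y. \<not> generated_by l Y S} = P_single l k"
proof -
  let ?OP = "ordered_partitions l"
  let ?c = "card {Y\<in>?OP. generated_by l Y S}"
  let ?Cb = "(l*(l+1)) choose (2*k)"
  have ne: "?OP \<noteq> {}" using Y0_op by auto
  have Cb: "?Cb > 0"
  proof -
    have "l+1 \<le> l*(l+1)" using l by simp
    then have "2*k \<le> l*(l+1)" by (rule order_trans[OF kl])
    then show ?thesis by (simp only: zero_less_binomial_iff)
  qed
  have opos: "card ?OP > 0" using ne op_finite by (simp add: card_gt_0_iff)
  have "measure_pmf.prob (pmf_of_set ?OP) {Y. \<not> generated_by l Y S}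
        = card (?OP \<inter> {Y. \<not> generated_by l Y S}) / card ?OP"
    using ne op_finite by (simp add: measure_pmf_of_set)
  also have "card (?OP \<inter> {Y. \<not> generated_by l Y S}) = card ?OP - ?c"
  proof -
    have "?OP \<inter> {Y. \<not> generated_by l Y S} = ?OP - {Y\<in>?OP. generated_by l Y S}" by auto
    then show ?thesis using op_finite by (simp add: card_Diff_subset)
  qed
  also have "real (card ?OP - ?c) = real (card ?OP) - real ?c"
    using op_finite by (intro of_nat_diff card_mono) auto
  also have "(real (card ?OP) - real ?c) / real (card ?OP) = 1 - real ?c / real (card ?OP)"
    using opos by (simp add: field_simps)
  also have "real ?c / real (card ?OP) = real (((l+1) choose (2*k)) * l^(2*k)) / real ?Cb"
  proof -
    have "real ?c * real ?Cb = real (card ?OP) * real (((l+1) choose (2*k)) * l^(2*k))"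
      using count_eq[OF S] by (metis of_nat_mult)
    then show ?thesis using opos Cb by (simp add: field_simps)
  qed
  finally show ?thesis unfolding P_single_def by (simp add: mult.commute)
qed

lemma prob_none:
  assumes S: "S \<in> subsets_2k l k" and l: "l \<ge> 1" and kl: "2*k \<le> l+1"
  shows "measure_pmf.prob (partitions_pmf l N) {Ys. \<forall>j<N. \<not> generated_by l (Ys j) S} = P_single l k ^ N"
proof -
  have "{Ys. \<forall>j<N. \<not> generated_by l (Ys j) S} = Pi {..<N} (\<lambda>_. {Y. \<not> generated_by l Y S})"
    by (auto simp: Pi_def)
  then show ?thesis unfolding partitions_pmf_def
    by (simp add: measure_Pi_pmf_Pi prob_not_gen[OF S l kl])
qed

lemma part1:
  assumes l: "l \<ge> 1" and kl: "2*k \<le> l+1"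
  shows "P_N l k N \<le> real ((l*(l+1)) choose (2*k)) * P_single l k ^ N"
proof -
  let ?M = "partitions_pmf l N"
  let ?E = "\<lambda>S. {Ys. \<forall>j<N. \<not> generated_by l (Ys j) S}"
  have "{Ys. \<exists>S\<in>subsets_2k l k. \<forall>j<N. \<not> generated_by l (Ys j) S} = (\<Union>S\<in>subsets_2k l k. ?E S)"
    by auto
  then have "P_N l k N = measure_pmf.prob ?M (\<Union>S\<in>subsets_2k l k. ?E S)" unfolding P_N_def by simp
  also have "\<dots> \<le> (\<Sum>S\<in>subsets_2k l k. measure_pmf.prob ?M (?E S))"
    by (rule measure_pmf.finite_measure_subadditive_finite) (auto simp: subsets_finite)
  also have "\<dots> = (\<Sum>S\<in>subsets_2k l k. P_single l k ^ N)"
    by (rule sum.cong[OF refl]) (rule prob_none[OF _ l kl])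
  also have "\<dots> = real ((l*(l+1)) choose (2*k)) * P_single l k ^ N"
    by (simp add: card_subsets)
  finally show ?thesis .
qed

lemma P_single_nonneg:
  assumes l: "l \<ge> 1" and kl: "2*k \<le> l+1"
  shows "0 \<le> P_single l k"
proof -
  have "subsets_2k l k \<noteq> {}"
  proof -
    have "card (subsets_2k l k) > 0" unfolding card_subsets using kl l
      by (simp add: order_trans[OF kl] )
    then show ?thesis by auto
  qed
  then obtain S where S: "S \<in> subsets_2k l k" by auto
  show ?thesis using prob_not_gen[OF S l kl] by (metis measure_nonneg)
qed




lemma prod_ge_1_minus_sum:
  fixes x a :: "nat \<Rightarrow> real"
  assumes "\<And>i. i < m \<Longrightarrow> 0 \<le> x i \<and> 1 - x i \<le> a i \<and> 0 \<le> a i"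
  shows "1 - (\<Sum>i<m. x i) \<le> (\<Prod>i<m. a i) \<and> 0 \<le> (\<Prod>i<m. a i)"
  using assms
proof (induction m)
  case 0 then show ?case by simp
next
  case (Suc m)
  have IH: "1 - (\<Sum>i<m. x i) \<le> (\<Prod>i<m. a i)" "0 \<le> (\<Prod>i<m. a i)" using Suc by auto
  have xm: "0 \<le> x m" "1 - x m \<le> a m" "0 \<le> a m" using Suc.prems[of m] by auto
  have s0: "0 \<le> (\<Sum>i<m. x i)" using Suc.prems by (intro sum_nonneg) auto
  let ?s = "(\<Sum>i<m. x i)" and ?P = "(\<Prod>i<m. a i)"
  have P0: "0 \<le> ?P * a m" using IH(2) xm(3) by simp
  have "1 - (?s + x m) \<le> ?P * a m"
  proof (cases "0 \<le> 1 - ?s \<and> 0 \<le> 1 - x m")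
    case True
    have "(1 - ?s) * (1 - x m) \<le> ?P * a m" using IH xm True by (intro mult_mono) auto
    moreover have "1 - (?s + x m) \<le> (1 - ?s) * (1 - x m)"
    proof -
      have "(1 - ?s) * (1 - x m) = 1 - (?s + x m) + ?s * x m" by (simp add: algebra_simps)
      moreover have "0 \<le> ?s * x m" using s0 xm by simp
      ultimately show ?thesis by linarith
    qed
    ultimately show ?thesis by linarith
  next
    case False
    then show ?thesis using P0 s0 xm by auto
  qed
  then show ?case using P0 by simp
qed

lemma choose_prod: "real (n choose m) = (\<Prod>i<m. real n - real i) / fact m"
proof -
  have "real (n choose m) = (real n gchoose m)" by (rule binomial_gbinomial)
  moreover have "(real n gchoose m) * fact m = (\<Prod>i = 0..<m. real n - of_nat i)" by (rule gbinomial_mult_fact')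
  ultimately have "real (n choose m) * fact m = (\<Prod>i<m. real n - real i)" by (simp add: atLeast0LessThan)
  then show ?thesis by (simp add: field_simps)
qed

lemma factor_bound:
  fixes L t :: real
  assumes L: "1 \<le> L" and t: "0 \<le> t" "t \<le> L"
  shows "1 - t / L \<le> L * (L + 1 - t) / (L * (L + 1) - t)" and "0 \<le> L * (L + 1 - t) / (L * (L + 1) - t)"
proof -
  have Bpos: "0 < L * (L + 1) - t"
  proof -
    have "L \<le> L * L" using L by (simp add: mult_le_cancel_left1)
    moreover have "L * (L + 1) = L * L + L" by (simp add: algebra_simps)
    ultimately show ?thesis using t L by linarith
  qed
  have id: "(L - t) * (L * (L + 1) - t) = L * L * (L + 1 - t) - t * (2 * L - t)" by (simp add: algebra_simps)
  have "0 \<le> t * (2 * L - t)" using t L by simp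
  then have key: "(L - t) * (L * (L + 1) - t) \<le> L * (L + 1 - t) * L" using id by (simp add: algebra_simps)
  have "1 - t / L = (L - t) / L" using L by (simp add: field_simps)
  also have "\<dots> \<le> L * (L + 1 - t) / (L * (L + 1) - t)"
    using key Bpos L by (simp add: divide_le_eq le_divide_eq mult.commute mult.left_commute)
  finally show "1 - t / L \<le> L * (L + 1 - t) / (L * (L + 1) - t)" .
  show "0 \<le> L * (L + 1 - t) / (L * (L + 1) - t)" using Bpos L t by simp
qed

lemma P_single_upper:
  assumes l: "2*k \<le> l" and k: "k \<ge> 1"
  shows "P_single l k \<le> real (2*k) ^ 2 / real l"
proof -
  let ?m = "2*k" and ?L = "real l"
  have L1: "1 \<le> ?L" using l k by simp
  define a where "a i = ?L * (?L + 1 - real i) / (?L * (?L + 1) - real i)" for i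
  have ratio: "?L ^ ?m * real ((l+1) choose ?m) / real ((l*(l+1)) choose ?m) = (\<Prod>i<?m. a i)"
  proof -
    have "?L ^ ?m * real ((l+1) choose ?m) / real ((l*(l+1)) choose ?m)
        = ?L ^ ?m * ((\<Prod>i<?m. real (l+1) - real i) / fact ?m) / ((\<Prod>i<?m. real (l*(l+1)) - real i) / fact ?m)"
      by (simp only: choose_prod)
    also have "\<dots> = (\<Prod>i<?m. ?L) * (\<Prod>i<?m. ?L + 1 - real i) / (\<Prod>i<?m. ?L * (?L + 1) - real i)"
      by (simp add: field_simps)
    also have "\<dots> = (\<Prod>i<?m. ?L * (?L + 1 - real i)) / (\<Prod>i<?m. ?L * (?L + 1) - real i)"
      by (simp add: prod.distrib)
    also have "\<dots> = (\<Prod>i<?m. a i)" unfolding a_def by (rule prod_dividef[symmetric])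
    finally show ?thesis .
  qed
  have "1 - (\<Sum>i<?m. real i / ?L) \<le> (\<Prod>i<?m. a i)"
  proof -
    have "\<And>i. i < ?m \<Longrightarrow> 0 \<le> real i / ?L \<and> 1 - real i / ?L \<le> a i \<and> 0 \<le> a i"
    proof -
      fix i assume "i < ?m"
      then have "real i \<le> ?L" using l by simp
      then show "0 \<le> real i / ?L \<and> 1 - real i / ?L \<le> a i \<and> 0 \<le> a i"
        using factor_bound[OF L1, of "real i"] unfolding a_def by simp
    qed
    then show ?thesis using prod_ge_1_minus_sum[of ?m "\<lambda>i. real i / ?L" a] by blast
  qed
  moreover have "(\<Sum>i<?m. real i / ?L) \<le> (\<Sum>i<?m. real ?m / ?L)"
    using L1 by (intro sum_mono divide_right_mono) auto
  moreover have "(\<Sum>i<?m. real ?m / ?L) = real ?m ^ 2 / ?L" by (simp add: power2_eq_square)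
  ultimately show ?thesis unfolding P_single_def using ratio by linarith
qed

lemma asym_bound:
  assumes k: "k \<ge> 1" and l: "2*k \<le> l"
  shows "0 \<le> P_N l k N \<and> P_N l k N \<le> (4^k * (real (2*k)^2)^N) * real l powr (real (4*k) - real N)"
proof -
  let ?L = "real l" and ?m = "2*k"
  have l1: "l \<ge> 1" using k l by simp
  have kl: "2*k \<le> l+1" using l by simp
  have L1: "1 \<le> ?L" using l1 by simp
  have P0: "0 \<le> P_single l k" by (rule P_single_nonneg[OF l1 kl])
  have Pu: "P_single l k \<le> real ?m ^ 2 / ?L" by (rule P_single_upper[OF l k])
  have Cb: "real ((l*(l+1)) choose ?m) \<le> (2 * ?L^2) ^ ?m"
  proof -
    have a: "((l*(l+1)) choose ?m) * fact ?m \<le> (l*(l+1))^?m" by (rule binomial_fact_pow)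
    have b: "((l*(l+1)) choose ?m) * 1 \<le> ((l*(l+1)) choose ?m) * fact ?m"
      by (rule mult_le_mono2) (rule fact_ge_1)
    have b2: "((l*(l+1)) choose ?m) \<le> ((l*(l+1)) choose ?m) * fact ?m" using b by (simp only: mult_1_right)
    have "((l*(l+1)) choose ?m) \<le> (l*(l+1))^?m" by (rule le_trans[OF b2 a])
    then have "real ((l*(l+1)) choose ?m) \<le> real ((l*(l+1))^?m)" by (simp only: of_nat_le_iff)
    also have "real ((l*(l+1))^?m) = (?L * (?L + 1))^?m" by (simp only: of_nat_power of_nat_mult of_nat_add of_nat_1)
    also have "\<dots> \<le> (2 * ?L^2) ^ ?m"
    proof (rule power_mono)
      have "?L * (?L + 1) = ?L * ?L + ?L" by (simp add: algebra_simps)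
      moreover have "?L \<le> ?L * ?L" using L1 by (simp add: mult_le_cancel_left1)
      moreover have "2 * ?L^2 = ?L * ?L + ?L * ?L" by (simp add: power2_eq_square)
      ultimately show "?L * (?L + 1) \<le> 2 * ?L^2" by linarith
      show "0 \<le> ?L * (?L + 1)" by simp
    qed
    finally show ?thesis .
  qed
  have "P_N l k N \<le> real ((l*(l+1)) choose ?m) * P_single l k ^ N" by (rule part1[OF l1 kl])
  also have "\<dots> \<le> (2 * ?L^2) ^ ?m * (real ?m ^ 2 / ?L) ^ N"
  proof (rule mult_mono[OF Cb power_mono[OF Pu P0]])
    show "0 \<le> (2 * ?L^2) ^ ?m" by simp
    show "0 \<le> P_single l k ^ N" using P0 by simp
  qed
  also have "\<dots> = (4^k * (real ?m^2)^N) * (?L ^ (4*k) / ?L ^ N)"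
  proof -
    have e1: "(2 * ?L^2)^(2*k) = 2^(2*k) * (?L^2)^(2*k)" by (rule power_mult_distrib)
    have e2: "(2::real)^(2*k) = 4^k" by (simp add: power_mult)
    have e3: "(?L^2)^(2*k) = ?L^(4*k)"
    proof -
      have "(?L^2)^(2*k) = ?L^(2*(2*k))" by (simp only: power_mult)
      also have "2*(2*k) = 4*k" by simp
      finally show ?thesis .
    qed
    have e4: "(real ?m ^ 2 / ?L) ^ N = (real ?m^2)^N / ?L^N" by (rule power_divide)
    show ?thesis unfolding e1 e2 e3 e4 by simp
  qed
  also have "?L ^ (4*k) / ?L ^ N = ?L powr (real (4*k) - real N)"
  proof -
    have Lp: "0 < ?L" using L1 by simp
    have "?L powr (real (4*k) - real N) = ?L powr real (4*k) / ?L powr real N" by (rule powr_diff)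
    also have "\<dots> = ?L ^ (4*k) / ?L ^ N" by (simp only: powr_realpow[OF Lp])
    finally show ?thesis by simp
  qed
  finally have up: "P_N l k N \<le> (4^k * (real ?m^2)^N) * ?L powr (real (4*k) - real N)" .
  have "0 \<le> P_N l k N" unfolding P_N_def by (rule measure_nonneg)
  then show ?thesis using up by simp
qed

theorem mainTheorem10:
  fixes k N :: nat
  assumes "k \<ge> 1" and "N \<ge> 1"
  shows "(\<forall>l\<ge>1. 2*k \<le> l+1 \<longrightarrow>
            P_N l k N \<le> real ((l*(l+1)) choose (2*k)) * P_single l k ^ N)
       \<and> (\<lambda>l. P_N l k N) \<in> O(\<lambda>l. real l powr (real (4*k) - real N))
       \<and> (N > 4*k \<longrightarrow> (\<lambda>l. P_N l k N) \<longlonglongrightarrow> 0)"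
proof (intro conjI allI impI)
  fix l :: nat assume "l \<ge> 1" "2*k \<le> l+1"
  then show "P_N l k N \<le> real ((l*(l+1)) choose (2*k)) * P_single l k ^ N" by (rule part1)
next
  let ?K = "4^k * (real (2*k)^2)^N :: real"
  have ev: "eventually (\<lambda>l. 0 \<le> P_N l k N \<and> P_N l k N \<le> ?K * real l powr (real (4*k) - real N)) sequentially"
  proof (rule eventually_sequentiallyI[of "2*k"])
    fix l assume "2*k \<le> l" then show "0 \<le> P_N l k N \<and> P_N l k N \<le> ?K * real l powr (real (4*k) - real N)"
      by (rule asym_bound[OF assms(1)])
  qed
  have ev1: "eventually (\<lambda>l. norm (P_N l k N) \<le> ?K * norm (real l powr (real (4*k) - real N))) sequentially"
  proof (rule eventually_mono[OF ev])
    fix l assume h: "0 \<le> P_N l k N \<and> P_N l k N \<le> ?K * real l powr (real (4*k) - real N)"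
    have "norm (real l powr (real (4*k) - real N)) = real l powr (real (4*k) - real N)" by simp
    then show "norm (P_N l k N) \<le> ?K * norm (real l powr (real (4*k) - real N))" using h by simp
  qed
  then show "(\<lambda>l. P_N l k N) \<in> O(\<lambda>l. real l powr (real (4*k) - real N))" by (rule bigoI)
next
  let ?K = "4^k * (real (2*k)^2)^N :: real"
  have ev: "eventually (\<lambda>l. 0 \<le> P_N l k N \<and> P_N l k N \<le> ?K * real l powr (real (4*k) - real N)) sequentially"
  proof (rule eventually_sequentiallyI[of "2*k"])
    fix l assume "2*k \<le> l" then show "0 \<le> P_N l k N \<and> P_N l k N \<le> ?K * real l powr (real (4*k) - real N)"
      by (rule asym_bound[OF assms(1)])
  qed
  assume N: "N > 4*k"
  have "real (4*k) - real N < 0" using N by simp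
  then have "(\<lambda>l. real l powr (real (4*k) - real N)) \<longlonglongrightarrow> 0"
    by (rule tendsto_neg_powr) (rule filterlim_real_sequentially)
  then have lim: "(\<lambda>l. ?K * real l powr (real (4*k) - real N)) \<longlonglongrightarrow> 0"
    by (rule tendsto_mult_right_zero)
  have ev0: "eventually (\<lambda>l. 0 \<le> P_N l k N) sequentially" by (rule eventually_mono[OF ev]) (rule conjunct1)
  have ev2: "eventually (\<lambda>l. P_N l k N \<le> ?K * real l powr (real (4*k) - real N)) sequentially"
    by (rule eventually_mono[OF ev]) (rule conjunct2)
  show "(\<lambda>l. P_N l k N) \<longlonglongrightarrow> 0"
    by (rule tendsto_sandwich[OF ev0 ev2 tendsto_const lim])
qed


end
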